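(* Let $d \geq 1$ be a fixed dimension and let $G_{\mathrm{base}}$ be an unweighted $d$-dimensional grid graph on $L$ vertices (vertex set $[n_1]\times\cdots\times[n_d]$, two vertices adjacent iff they differ by exactly $1$ in exactly one coordinate). Then for every function $f$, the pair $(G_{\mathrm{base}}, f)$ is tractable, i.e. the mask $\mathbf{M} = [f(\mathrm{dist}_{G_{\mathrm{base}}}(i,j))]_{i,j=1,\dots,L}$ supports matrix-vector multiplication in time sub-quadratic in $L$.
   Context: $\mathrm{dist}_{G_{\mathrm{base}}}(i,j)$ denotes the shortest-path distance between vertices $i$ and $j$ in $G_{\mathrm{base}}$. A pair $(G_{\mathrm{base}}, f)$ is called tractable if the matrix $[f(\mathrm{dist}_{G_{\mathrm{base}}}(i,j))]_{i,j}$ admits an algorithm computing $\mathbf{M}\mathbf{x}$ for any input $\mathbf{x}\in\mathbb{R}^L$ in $o(L^2)$ time. *)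

theory Defs
  imports Complex_Main "HOL-Library.Landau_Symbols"
begin

definition grid_vertices :: "nat list \<Rightarrow> nat list set" where
  "grid_vertices ns = {v. length v = length ns \<and> (\<forall>i<length ns. v ! i < ns ! i)}"

definition grid_adj :: "nat list \<Rightarrow> nat list \<Rightarrow> nat list \<Rightarrow> bool" where
  "grid_adj ns u v \<longleftrightarrow> u \<in> grid_vertices ns \<and> v \<in> grid_vertices ns \<and>
     (\<exists>k<length ns. (u ! k = v ! k + 1 \<or> v ! k = u ! k + 1) \<and>
                    (\<forall>i<length ns. i \<noteq> k \<longrightarrow> u ! i = v ! i))"

fun walk_of_len :: "('a \<Rightarrow> 'a \<Rightarrow> bool) \<Rightarrow> nat \<Rightarrow> 'a \<Rightarrow> 'a \<Rightarrow> bool" where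
  "walk_of_len E 0 u v = (u = v)"
| "walk_of_len E (Suc k) u v = (\<exists>w. E u w \<and> walk_of_len E k w v)"

definition graph_dist :: "('a \<Rightarrow> 'a \<Rightarrow> bool) \<Rightarrow> 'a \<Rightarrow> 'a \<Rightarrow> nat" where
  "graph_dist E u v = (LEAST k. walk_of_len E k u v)"

text \<open>Instructions; register operands refer to earlier registers; inputs are indexed by 'a.\<close>
datatype 'a instr = Const real | Input 'a | Add nat nat | Sub nat nat | Mul nat nat

fun instr_ok :: "nat \<Rightarrow> 'a instr \<Rightarrow> bool" where
  "instr_ok p (Add a b) = (a < p \<and> b < p)"
| "instr_ok p (Sub a b) = (a < p \<and> b < p)"
| "instr_ok p (Mul a b) = (a < p \<and> b < p)"
| "instr_ok p _ = True"

definition wf_prog :: "'a instr list \<Rightarrow> bool" where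
  "wf_prog P \<longleftrightarrow> (\<forall>p<length P. instr_ok p (P ! p))"

fun eval_instr :: "('a \<Rightarrow> real) \<Rightarrow> real list \<Rightarrow> 'a instr \<Rightarrow> real" where
  "eval_instr x r (Const c) = c"
| "eval_instr x r (Input i) = x i"
| "eval_instr x r (Add a b) = r ! a + r ! b"
| "eval_instr x r (Sub a b) = r ! a - r ! b"
| "eval_instr x r (Mul a b) = r ! a * r ! b"

definition run_prog :: "'a instr list \<Rightarrow> ('a \<Rightarrow> real) \<Rightarrow> real list" where
  "run_prog P x = fold (\<lambda>ins r. r @ [eval_instr x r ins]) P []"

definition computes_matvec ::
  "'a instr list \<Rightarrow> ('a \<Rightarrow> nat) \<Rightarrow> 'a set \<Rightarrow> ('a \<Rightarrow> 'a \<Rightarrow> real) \<Rightarrow> bool" where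
  "computes_matvec P out V M \<longleftrightarrow> wf_prog P \<and> (\<forall>u\<in>V. out u < length P) \<and>
     (\<forall>x. \<forall>u\<in>V. run_prog P x ! out u = (\<Sum>v\<in>V. M u v * x v))"

end

theory Submission
  imports Defs "HOL-Real_Asymp.Real_Asymp"
begin


definition exec :: "('a \<Rightarrow> real) \<Rightarrow> 'a instr list \<Rightarrow> real list \<Rightarrow> real list" where
  "exec x Q r = fold (\<lambda>ins r. r @ [eval_instr x r ins]) Q r"

lemma run_exec: "run_prog P x = exec x P []"
  by (simp add: run_prog_def exec_def)

lemma exec_append: "exec x (Q1 @ Q2) r = exec x Q2 (exec x Q1 r)"
  by (simp add: exec_def)

lemma exec_Cons: "exec x (i # Q) r = exec x Q (r @ [eval_instr x r i])"
  by (simp add: exec_def)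

lemma exec_snoc: "exec x (Q @ [i]) r = exec x Q r @ [eval_instr x (exec x Q r) i]"
  by (simp add: exec_def)

lemma exec_ext: "\<exists>s. exec x Q r = r @ s \<and> length s = length Q"
proof (induction Q arbitrary: r)
  case Nil then show ?case by (simp add: exec_def)
next
  case (Cons i Q)
  obtain s where "exec x Q (r @ [eval_instr x r i]) = (r @ [eval_instr x r i]) @ s" "length s = length Q"
    using Cons by blast
  then show ?case by (auto simp: exec_Cons)
qed

lemma exec_length[simp]: "length (exec x Q r) = length r + length Q"
  using exec_ext[of x Q r] by auto

lemma exec_prefix: "p < length r \<Longrightarrow> exec x Q r ! p = r ! p"
  using exec_ext[of x Q r] by (auto simp: nth_append)

lemma instr_ok_mono: "instr_ok n i \<Longrightarrow> n \<le> m \<Longrightarrow> instr_ok m i"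
  by (cases i) auto

lemma eval_ext: "instr_ok (length r) i \<Longrightarrow> eval_instr x (r @ s) i = eval_instr x r i"
  by (cases i) (auto simp: nth_append)

lemma exec_block:
  assumes "\<forall>i<m. instr_ok (length r) (h i)" "i < m"
  shows "exec x (map h [0..<m]) r ! (length r + i) = eval_instr x r (h i)"
  using assms
proof (induction m arbitrary: i)
  case 0 then show ?case by simp
next
  case (Suc m)
  obtain s where s: "exec x (map h [0..<m]) r = r @ s" "length s = m"
    using exec_ext[of x "map h [0..<m]" r] by auto
  show ?case
  proof (cases "i < m")
    case True
    then show ?thesis using Suc by (simp add: exec_snoc nth_append)
  next
    case False
    then have "i = m" using Suc by simp
    then show ?thesis using s Suc.prems eval_ext[of r "h m" x s]
      by (simp add: exec_snoc nth_append)
  qed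
qed

definition frag_ok :: "nat \<Rightarrow> 'a instr list \<Rightarrow> bool" where
  "frag_ok n Q \<longleftrightarrow> (\<forall>p<length Q. instr_ok (n + p) (Q ! p))"

lemma frag_ok_append: "frag_ok n (Q1 @ Q2) \<longleftrightarrow> frag_ok n Q1 \<and> frag_ok (n + length Q1) Q2"
proof
  assume H: "frag_ok n (Q1 @ Q2)"
  have "frag_ok n Q1" unfolding frag_ok_def
  proof (intro allI impI)
    fix p assume "p < length Q1"
    then show "instr_ok (n + p) (Q1 ! p)" using H unfolding frag_ok_def
      by (metis length_append nth_append trans_less_add1)
  qed
  moreover have "frag_ok (n + length Q1) Q2" unfolding frag_ok_def
  proof (intro allI impI)
    fix p assume "p < length Q2"
    then have "instr_ok (n + (length Q1 + p)) ((Q1 @ Q2) ! (length Q1 + p))"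
      using H[unfolded frag_ok_def, rule_format, of "length Q1 + p"] by simp
    then show "instr_ok (n + length Q1 + p) (Q2 ! p)" by (simp add: add.assoc)
  qed
  ultimately show "frag_ok n Q1 \<and> frag_ok (n + length Q1) Q2" by simp
next
  assume H: "frag_ok n Q1 \<and> frag_ok (n + length Q1) Q2"
  show "frag_ok n (Q1 @ Q2)" unfolding frag_ok_def
  proof (intro allI impI)
    fix p assume p: "p < length (Q1 @ Q2)"
    show "instr_ok (n + p) ((Q1 @ Q2) ! p)"
    proof (cases "p < length Q1")
      case True then show ?thesis using H by (simp add: frag_ok_def nth_append)
    next
      case False
      then obtain q where q: "p = length Q1 + q" "q < length Q2" using p
        by (metis add_diff_inverse_nat length_append nat_add_left_cancel_less)
      then show ?thesis using H by (simp add: frag_ok_def nth_append add.assoc)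
    qed
  qed
qed

lemma frag_ok_block: "\<forall>i<m. instr_ok n (h i) \<Longrightarrow> frag_ok n (map h [0..<m])"
  unfolding frag_ok_def by (auto intro: instr_ok_mono)

lemma wf_frag: "wf_prog P \<longleftrightarrow> frag_ok 0 P"
  by (simp add: wf_prog_def frag_ok_def)

lemma sum_lessThan_add: "(\<Sum>i<m+(n::nat). (f i :: 'b::comm_monoid_add)) = (\<Sum>i<m. f i) + (\<Sum>i<n. f (m+i))"
  by (induction n) (auto simp: add.assoc)



fun glen :: "nat \<Rightarrow> nat" where
  "glen 0 = 2"
| "glen (Suc k) = 3 * glen k + 3 * 2 ^ k"

fun genP :: "nat \<Rightarrow> (int \<Rightarrow> real) \<Rightarrow> nat list \<Rightarrow> nat \<Rightarrow> 'a instr list" where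
  "genP 0 t xs b = [Const (t 0), Mul b (xs ! 0)]"
| "genP (Suc k) t xs b =
    map (\<lambda>i. Add (xs ! i) (xs ! (2^k + i))) [0..<2^k]
    @ genP k t [b..<b + 2^k] (b + 2^k)
    @ genP k (\<lambda>c. t (c - int (2^k)) - t c) (drop (2^k) xs) (b + 2^k + glen k)
    @ genP k (\<lambda>c. t (c + int (2^k)) - t c) (take (2^k) xs) (b + 2^k + 2 * glen k)
    @ map (\<lambda>i. if i < 2^k then Add (b + glen k + i) (b + 2 * glen k + i)
                else Add (b + glen k + (i - 2^k)) (b + 3 * glen k + (i - 2^k))) [0..<2 * 2^k]"

lemma glen_ge: "2 ^ k \<le> glen k"
  by (induction k) auto

lemma glen_bound: "glen k \<le> 5 * 3 ^ k"
proof -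
  have "glen k + 3 * 2 ^ k = 5 * 3 ^ k" by (induction k) auto
  then show ?thesis by linarith
qed

lemma genP_length[simp]: "length (genP k t xs b) = glen k"
  by (induction k arbitrary: t xs b) auto

lemma genP_ok:
  assumes "length xs = 2 ^ k" "\<forall>j\<in>set xs. j < b"
  shows "frag_ok b (genP k t xs b)"
  using assms
proof (induction k arbitrary: t xs b)
  case 0
  then have "xs ! 0 < b" by (simp add: nth_mem)
  then show ?case by (auto simp: frag_ok_def nth_Cons')
next
  case (Suc k)
  let ?m = "2 ^ k :: nat"
  have xs: "\<forall>i<?m. xs ! i < b \<and> xs ! (?m + i) < b" using Suc.prems by auto
  have "frag_ok b (map (\<lambda>i. Add (xs ! i) (xs ! (2^k + i))) [0..<2^k] :: 'a instr list)"
    by (rule frag_ok_block) (use xs in auto)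
  moreover have "frag_ok (b + ?m) (genP k t [b..<b + 2^k] (b + 2^k) :: 'a instr list)"
    by (rule Suc.IH) auto
  moreover have "frag_ok (b + ?m + glen k) (genP k (\<lambda>c. t (c - int (2^k)) - t c) (drop (2^k) xs) (b + 2^k + glen k) :: 'a instr list)"
    by (rule Suc.IH) (use Suc.prems in \<open>simp_all, meson in_set_dropD less_imp_add_positive trans_less_add1\<close>)
  moreover have "frag_ok (b + ?m + 2 * glen k) (genP k (\<lambda>c. t (c + int (2^k)) - t c) (take (2^k) xs) (b + 2^k + 2 * glen k) :: 'a instr list)"
    by (rule Suc.IH) (use Suc.prems in \<open>simp_all, meson in_set_takeD trans_less_add1\<close>)
  moreover have "frag_ok (b + ?m + 3 * glen k) (map (\<lambda>i. if i < 2^k then Add (b + glen k + i) (b + 2 * glen k + i)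
                else Add (b + glen k + (i - 2^k)) (b + 3 * glen k + (i - 2^k))) [0..<2 * 2^k] :: 'a instr list)"
    by (rule frag_ok_block) auto
  ultimately show ?case
    by (simp add: frag_ok_append algebra_simps mult_2 mult_2_right numeral_3_eq_3)
qed

lemma genP_val:
  assumes "length xs = 2 ^ k" "\<forall>j\<in>set xs. j < length r" "a < 2 ^ k"
  shows "exec x (genP k t xs (length r)) r ! (length r + glen k - 2 ^ k + a)
           = (\<Sum>j<2^k. t (int a - int j) * r ! (xs ! j))"
  using assms
proof (induction k arbitrary: t xs r a)
  case 0
  then have "xs ! 0 < length r" by (simp add: nth_mem)
  then show ?case using 0 by (simp add: exec_Cons exec_def nth_append)
next
  case (Suc k)
  let ?m = "2^k::nat"
  let ?b = "length r"
  define h :: "nat \<Rightarrow> 'a instr" where "h = (\<lambda>i. if i < 2^k then Add (?b + glen k + i) (?b + 2 * glen k + i)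
                else Add (?b + glen k + (i - 2^k)) (?b + 3 * glen k + (i - 2^k)))"
  define S :: "'a instr list" where "S = map (\<lambda>i. Add (xs ! i) (xs ! (2^k + i))) [0..<2^k]"
  define t2 where "t2 = (\<lambda>c. t (c - int (2^k)) - t c)"
  define t3 where "t3 = (\<lambda>c. t (c + int (2^k)) - t c)"
  define Q1 :: "'a instr list" where "Q1 = genP k t [?b..<?b + 2^k] (?b + 2^k)"
  define Q2 :: "'a instr list" where "Q2 = genP k t2 (drop (2^k) xs) (?b + 2^k + glen k)"
  define Q3 :: "'a instr list" where "Q3 = genP k t3 (take (2^k) xs) (?b + 2^k + 2 * glen k)"
  define F :: "'a instr list" where "F = map h [0..<2 * 2^k]"
  have gen: "genP (Suc k) t xs ?b = S @ Q1 @ Q2 @ Q3 @ F"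
    by (simp add: S_def Q1_def Q2_def Q3_def F_def h_def t2_def t3_def)
  define r1 where "r1 = exec x S r"
  define r2 where "r2 = exec x Q1 r1"
  define r3 where "r3 = exec x Q2 r2"
  define r4 where "r4 = exec x Q3 r3"
  have ex: "exec x (genP (Suc k) t xs ?b) r = exec x F r4"
    unfolding gen r1_def r2_def r3_def r4_def by (simp only: exec_append)
  have l1: "length r1 = ?b + ?m" by (simp add: r1_def S_def)
  have l2: "length r2 = ?b + ?m + glen k" by (simp add: r2_def Q1_def l1)
  have l3: "length r3 = ?b + ?m + 2 * glen k" by (simp add: r3_def Q2_def l2)
  have l4: "length r4 = ?b + ?m + 3 * glen k" by (simp add: r4_def Q3_def l3)
  have xsb: "\<And>j. j < 2 * ?m \<Longrightarrow> xs ! j < ?b" using Suc.prems by (simp add: nth_mem)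
  have p2: "\<And>p. p < ?b \<Longrightarrow> r2 ! p = r ! p"
    by (simp add: r2_def r1_def exec_prefix l1)
  have p3: "\<And>p. p < ?b \<Longrightarrow> r3 ! p = r ! p"
    using p2 l2 by (simp add: r3_def exec_prefix)
  have v1: "\<And>i. i < ?m \<Longrightarrow> r1 ! (?b + i) = r ! (xs ! i) + r ! (xs ! (?m + i))"
  proof -
    fix i assume i: "i < ?m"
    have "r1 ! (?b + i) = eval_instr x r (Add (xs ! i) (xs ! (2^k + i)))"
      unfolding r1_def S_def by (rule exec_block) (use xsb i in auto)
    then show "r1 ! (?b + i) = r ! (xs ! i) + r ! (xs ! (?m + i))" by simp
  qed
  have v2: "\<And>a. a < ?m \<Longrightarrow> r2 ! (?b + glen k + a) = (\<Sum>j<?m. t (int a - int j) * (r ! (xs ! j) + r ! (xs ! (?m + j))))"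
  proof -
    fix a assume a: "a < ?m"
    have "r2 ! (length r1 + glen k - 2 ^ k + a) = (\<Sum>j<2^k. t (int a - int j) * r1 ! ([?b..<?b + 2^k] ! j))"
      unfolding r2_def Q1_def l1[symmetric] by (rule Suc.IH) (use a l1 in auto)
    also have "\<dots> = (\<Sum>j<?m. t (int a - int j) * (r ! (xs ! j) + r ! (xs ! (?m + j))))"
      by (rule sum.cong) (auto simp: v1)
    finally show "r2 ! (?b + glen k + a) = (\<Sum>j<?m. t (int a - int j) * (r ! (xs ! j) + r ! (xs ! (?m + j))))"
      by (simp add: l1)
  qed
  have v3: "\<And>a. a < ?m \<Longrightarrow> r3 ! (?b + 2 * glen k + a) = (\<Sum>j<?m. t2 (int a - int j) * r ! (xs ! (?m + j)))"
  proof -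
    fix a assume a: "a < ?m"
    have "r3 ! (length r2 + glen k - 2 ^ k + a) = (\<Sum>j<2^k. t2 (int a - int j) * r2 ! (drop ?m xs ! j))"
      unfolding r3_def Q2_def by (subst l2[symmetric], rule Suc.IH)
        (use a l2 Suc.prems in \<open>auto dest!: in_set_dropD\<close>)
    also have "\<dots> = (\<Sum>j<?m. t2 (int a - int j) * r ! (xs ! (?m + j)))"
      by (rule sum.cong) (use Suc.prems xsb in \<open>auto simp: p2\<close>)
    finally show "r3 ! (?b + 2 * glen k + a) = (\<Sum>j<?m. t2 (int a - int j) * r ! (xs ! (?m + j)))"
      by (simp add: l2 algebra_simps mult_2 mult_2_right)
  qed
  have v4: "\<And>a. a < ?m \<Longrightarrow> r4 ! (?b + 3 * glen k + a) = (\<Sum>j<?m. t3 (int a - int j) * r ! (xs ! j))"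
  proof -
    fix a assume a: "a < ?m"
    have "r4 ! (length r3 + glen k - 2 ^ k + a) = (\<Sum>j<2^k. t3 (int a - int j) * r3 ! (take ?m xs ! j))"
      unfolding r4_def Q3_def by (subst l3[symmetric], rule Suc.IH)
        (use a l3 Suc.prems in \<open>auto dest!: in_set_takeD\<close>)
    also have "\<dots> = (\<Sum>j<?m. t3 (int a - int j) * r ! (xs ! j))"
      by (rule sum.cong) (use Suc.prems xsb in \<open>auto simp: p3\<close>)
    finally show "r4 ! (?b + 3 * glen k + a) = (\<Sum>j<?m. t3 (int a - int j) * r ! (xs ! j))"
      by (simp add: l3 algebra_simps numeral_3_eq_3 mult_2 mult_2_right)
  qed
  have q2: "\<And>p. p < length r2 \<Longrightarrow> r4 ! p = r2 ! p"
    using l2 l3 by (simp add: r4_def r3_def exec_prefix)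
  have q3: "\<And>p. p < length r3 \<Longrightarrow> r4 ! p = r3 ! p"
    by (simp add: r4_def exec_prefix)
  have hv: "exec x F r4 ! (length r4 + a) = eval_instr x r4 (h a)"
    unfolding F_def by (rule exec_block) (use Suc.prems l4 in \<open>auto simp: h_def\<close>)
  have pos: "length r + glen (Suc k) - 2 ^ Suc k + a = length r4 + a"
    by (simp add: l4)
  have m2: "(2::nat) ^ Suc k = 2 ^ k + 2 ^ k" by simp
  show ?case
  proof (cases "a < ?m")
    case True
    have "exec x F r4 ! (length r4 + a) = r4 ! (?b + glen k + a) + r4 ! (?b + 2 * glen k + a)"
      using hv True by (simp add: h_def)
    also have "\<dots> = r2 ! (?b + glen k + a) + r3 ! (?b + 2 * glen k + a)"
      using True l2 l3 by (simp add: q2 q3)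
    also have "\<dots> = (\<Sum>j<?m. t (int a - int j) * (r ! (xs ! j) + r ! (xs ! (?m + j))))
        + (\<Sum>j<?m. t2 (int a - int j) * r ! (xs ! (?m + j)))"
      using True by (simp add: v2 v3)
    also have "\<dots> = (\<Sum>j<?m. t (int a - int j) * r ! (xs ! j) + t (int a - int (?m + j)) * r ! (xs ! (?m + j)))"
      by (simp add: sum.distrib[symmetric] t2_def algebra_simps)
    also have "\<dots> = (\<Sum>j<?m + ?m. t (int a - int j) * r ! (xs ! j))"
      by (simp only: sum_lessThan_add sum.distrib)
    finally have R: "exec x F r4 ! (length r4 + a) = (\<Sum>j<?m + ?m. t (int a - int j) * r ! (xs ! j))" .
    show ?thesis unfolding ex pos unfolding m2 by (rule R)
  next
    case False
    then obtain a' where a': "a = ?m + a'" "a' < ?m" using Suc.prems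
      by (metis add_diff_inverse_nat mult_2 nat_add_left_cancel_less power_Suc)
    have "exec x F r4 ! (length r4 + a) = r4 ! (?b + glen k + a') + r4 ! (?b + 3 * glen k + a')"
      using hv a' by (simp add: h_def)
    also have "\<dots> = r2 ! (?b + glen k + a') + r4 ! (?b + 3 * glen k + a')"
      using a' l2 by (simp add: q2)
    also have "\<dots> = (\<Sum>j<?m. t (int a' - int j) * (r ! (xs ! j) + r ! (xs ! (?m + j))))
        + (\<Sum>j<?m. t3 (int a' - int j) * r ! (xs ! j))"
      using a' by (simp add: v2 v4)
    also have "\<dots> = (\<Sum>j<?m. t (int a - int j) * r ! (xs ! j) + t (int a - int (?m + j)) * r ! (xs ! (?m + j)))"
      by (simp add: sum.distrib[symmetric] t3_def algebra_simps a')
    also have "\<dots> = (\<Sum>j<?m + ?m. t (int a - int j) * r ! (xs ! j))"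
      by (simp only: sum_lessThan_add sum.distrib)
    finally have R: "exec x F r4 ! (length r4 + a) = (\<Sum>j<?m + ?m. t (int a - int j) * r ! (xs ! j))" .
    show ?thesis unfolding ex pos unfolding m2 by (rule R)
  qed
qed



definition dl :: "nat list \<Rightarrow> nat list \<Rightarrow> nat list \<Rightarrow> nat" where
  "dl ns u v = (\<Sum>i<length ns. nat \<bar>int (u ! i) - int (v ! i)\<bar>)"

lemma sum_delta_le:
  fixes f g :: "nat \<Rightarrow> nat"
  assumes "k < n" "\<forall>i<n. i \<noteq> k \<longrightarrow> f i = g i" "f k \<le> g k + c"
  shows "(\<Sum>i<n. f i) \<le> (\<Sum>i<n. g i) + c"
proof -
  have "(\<Sum>i<n. f i) \<le> (\<Sum>i<n. g i + (if i = k then c else 0))"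
    by (rule sum_mono) (use assms in auto)
  also have "\<dots> = (\<Sum>i<n. g i) + c" using assms(1) by (simp add: sum.distrib)
  finally show ?thesis .
qed

lemma sum_delta_eq:
  fixes f g :: "nat \<Rightarrow> nat"
  assumes "k < n" "\<forall>i<n. i \<noteq> k \<longrightarrow> f i = g i" "f k = g k + c"
  shows "(\<Sum>i<n. f i) = (\<Sum>i<n. g i) + c"
proof -
  have "(\<Sum>i<n. f i) = (\<Sum>i<n. g i + (if i = k then c else 0))"
    by (rule sum.cong) (use assms in auto)
  also have "\<dots> = (\<Sum>i<n. g i) + c" using assms(1) by (simp add: sum.distrib)
  finally show ?thesis .
qed

lemma adj_dl: "grid_adj ns u w \<Longrightarrow> dl ns u v \<le> dl ns w v + 1"
  unfolding grid_adj_def dl_def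
  by (elim conjE exE, rule sum_delta_le) auto

lemma walk_ge: "walk_of_len (grid_adj ns) k u v \<Longrightarrow> dl ns u v \<le> k"
proof (induction k arbitrary: u)
  case 0 then show ?case by (simp add: dl_def)
next
  case (Suc k)
  then obtain w where "grid_adj ns u w" "walk_of_len (grid_adj ns) k w v" by auto
  then show ?case using Suc.IH adj_dl[of ns u w v] by fastforce
qed

lemma walk_ex:
  assumes "u \<in> grid_vertices ns" "v \<in> grid_vertices ns"
  shows "walk_of_len (grid_adj ns) (dl ns u v) u v"
proof -
  have "\<And>u. u \<in> grid_vertices ns \<Longrightarrow> dl ns u v = n \<Longrightarrow> walk_of_len (grid_adj ns) n u v" for n
  proof (induction n)
    case 0
    have "u = v"
    proof (rule nth_equalityI)
      show "length u = length v" using 0 assms by (simp add: grid_vertices_def)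
      fix i assume "i < length u"
      then have "i < length ns" using 0 by (simp add: grid_vertices_def)
      then show "u ! i = v ! i" using 0 by (simp add: dl_def)
    qed
    then show ?case by simp
  next
    case (Suc n)
    have "\<exists>i<length ns. u ! i \<noteq> v ! i"
    proof (rule ccontr)
      assume "\<not> ?thesis"
      then have "dl ns u v = 0" by (simp add: dl_def)
      then show False using Suc by simp
    qed
    then obtain i where i: "i < length ns" "u ! i \<noteq> v ! i" by blast
    define w where "w = u[i := (if u ! i < v ! i then Suc (u ! i) else u ! i - 1)]"
    have lu: "length u = length ns" using Suc by (simp add: grid_vertices_def)
    have lv: "length v = length ns" using assms by (simp add: grid_vertices_def)
    have ub: "\<forall>j<length ns. u ! j < ns ! j" using Suc by (simp add: grid_vertices_def)
    have vb: "\<forall>j<length ns. v ! j < ns ! j" using assms by (simp add: grid_vertices_def)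
    have wg: "w \<in> grid_vertices ns"
      unfolding grid_vertices_def w_def using lu ub vb i
      by (auto simp: nth_list_update)
    have adj: "grid_adj ns u w"
      unfolding grid_adj_def using Suc.prems(1) wg i lu
      by (auto simp: w_def nth_list_update intro!: exI[of _ i])
    have "dl ns u v = dl ns w v + 1"
      unfolding dl_def by (rule sum_delta_eq[OF i(1)]) (use i lu in \<open>auto simp: w_def nth_list_update\<close>)
    then have "dl ns w v = n" using Suc by simp
    then have "walk_of_len (grid_adj ns) n w v" using Suc.IH wg by blast
    then show ?case using adj by auto
  qed
  then show ?thesis using assms by blast
qed

lemma dist_dl:
  assumes "u \<in> grid_vertices ns" "v \<in> grid_vertices ns"
  shows "graph_dist (grid_adj ns) u v = dl ns u v"
  unfolding graph_dist_def
  by (rule Least_equality) (use walk_ex[OF assms] walk_ge in auto)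



fun enc :: "nat list \<Rightarrow> nat list \<Rightarrow> nat" where
  "enc (n # ns) (a # u) = a + 2 * n * enc ns u"
| "enc _ _ = 0"

lemma grid_Nil: "grid_vertices [] = {[]}"
  by (auto simp: grid_vertices_def)

lemma grid_Cons_iff: "(a # u \<in> grid_vertices (n # ns)) = (a < n \<and> u \<in> grid_vertices ns)"
  unfolding grid_vertices_def by (auto simp: less_Suc_eq_0_disj)

lemma grid_Cons_ex: "v \<in> grid_vertices (n # ns) \<Longrightarrow> \<exists>a u. v = a # u"
  unfolding grid_vertices_def by (cases v) auto

lemma grid_Cons: "grid_vertices (n # ns) = (\<lambda>(a, u). a # u) ` ({..<n} \<times> grid_vertices ns)"
proof
  show "grid_vertices (n # ns) \<subseteq> (\<lambda>(a, u). a # u) ` ({..<n} \<times> grid_vertices ns)"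
  proof
    fix v assume v: "v \<in> grid_vertices (n # ns)"
    then obtain a u where "v = a # u" using grid_Cons_ex by blast
    then show "v \<in> (\<lambda>(a, u). a # u) ` ({..<n} \<times> grid_vertices ns)"
      using v grid_Cons_iff by force
  qed
  show "(\<lambda>(a, u). a # u) ` ({..<n} \<times> grid_vertices ns) \<subseteq> grid_vertices (n # ns)"
    using grid_Cons_iff by auto
qed

lemma card_grid: "finite (grid_vertices ns) \<and> card (grid_vertices ns) = prod_list ns"
proof (induction ns)
  case Nil then show ?case by (simp add: grid_Nil)
next
  case (Cons n ns)
  have inj: "inj_on (\<lambda>(a, u). a # u) ({..<n} \<times> grid_vertices ns)"
    by (auto simp: inj_on_def)
  show ?case using Cons
    by (simp add: grid_Cons card_image[OF inj] card_cartesian_product)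
qed

lemma enc_bound: "u \<in> grid_vertices ns \<Longrightarrow> enc ns u < prod_list (map (\<lambda>n. 2 * n) ns)"
proof (induction ns arbitrary: u)
  case Nil then show ?case by (simp add: grid_Nil)
next
  case (Cons n ns)
  then obtain a u' where u: "u = a # u'" using grid_Cons_ex by blast
  then have a: "a < n" and u': "u' \<in> grid_vertices ns" using Cons.prems grid_Cons_iff by auto
  have e: "Suc (enc ns u') \<le> prod_list (map (\<lambda>n. 2 * n) ns)" using Cons.IH[OF u'] by simp
  have "a + 2 * n * enc ns u' < 2 * n + 2 * n * enc ns u'" using a by simp
  also have "\<dots> = 2 * n * Suc (enc ns u')" by simp
  also have "\<dots> \<le> 2 * n * prod_list (map (\<lambda>n. 2 * n) ns)" using e by (rule mult_le_mono2)
  finally show ?case by (simp add: u)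
qed

lemma enc_diff:
  assumes "u \<in> grid_vertices ns" "v \<in> grid_vertices ns" "u' \<in> grid_vertices ns" "v' \<in> grid_vertices ns"
    "int (enc ns u) - int (enc ns v) = int (enc ns u') - int (enc ns v')"
    "i < length ns"
  shows "int (u ! i) - int (v ! i) = int (u' ! i) - int (v' ! i)"
  using assms
proof (induction ns arbitrary: u v u' v' i)
  case Nil then show ?case by simp
next
  case (Cons n ns)
  obtain a x where u: "u = a # x" using Cons.prems grid_Cons_ex by blast
  obtain b y where v: "v = b # y" using Cons.prems grid_Cons_ex by blast
  obtain a' x' where u': "u' = a' # x'" using Cons.prems grid_Cons_ex by blast
  obtain b' y' where v': "v' = b' # y'" using Cons.prems grid_Cons_ex by blast
  have g: "a < n" "b < n" "a' < n" "b' < n" "x \<in> grid_vertices ns" "y \<in> grid_vertices ns"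
    "x' \<in> grid_vertices ns" "y' \<in> grid_vertices ns"
    using Cons.prems u v u' v' grid_Cons_iff by auto
  define D where "D = (int a - int b) - (int a' - int b')"
  define E where "E = (int (enc ns x) - int (enc ns y)) - (int (enc ns x') - int (enc ns y'))"
  have eq: "D + 2 * int n * E = 0"
    using Cons.prems(5) unfolding D_def E_def u v u' v' by (simp add: algebra_simps)
  have Db: "\<bar>D\<bar> < 2 * int n" using g unfolding D_def by linarith
  have E0: "E = 0"
  proof (rule ccontr)
    assume "E \<noteq> 0"
    then have "\<bar>E\<bar> \<ge> 1" by linarith
    then have "2 * int n * \<bar>E\<bar> \<ge> 2 * int n" by (simp add: mult_le_cancel_left1)
    moreover have "\<bar>D\<bar> = 2 * int n * \<bar>E\<bar>" using eq
      by (metis abs_minus_cancel abs_mult abs_of_nonneg add_eq_0_iff2 mult_nonneg_nonneg of_nat_0_le_iff zero_le_numeral)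
    ultimately show False using Db by linarith
  qed
  then have D0: "D = 0" using eq by simp
  show ?case
  proof (cases i)
    case 0 then show ?thesis using D0 u v u' v' by (simp add: D_def)
  next
    case (Suc j)
    have "int (x ! j) - int (y ! j) = int (x' ! j) - int (y' ! j)"
      by (rule Cons.IH) (use g E0 Suc Cons.prems(6) in \<open>auto simp: E_def\<close>)
    then show ?thesis using Suc u v u' v' by simp
  qed
qed

lemma enc_inj: "inj_on (enc ns) (grid_vertices ns)"
proof (rule inj_onI)
  fix u u' assume u: "u \<in> grid_vertices ns" and u': "u' \<in> grid_vertices ns" and e: "enc ns u = enc ns u'"
  show "u = u'"
  proof (rule nth_equalityI)
    show "length u = length u'" using u u' by (simp add: grid_vertices_def)
    fix i assume "i < length u"
    then have i: "i < length ns" using u by (simp add: grid_vertices_def)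
    have "int (u ! i) - int (u ! i) = int (u' ! i) - int (u ! i)"
      by (rule enc_diff[OF u u u' u _ i]) (simp add: e)
    then show "u ! i = u' ! i" by simp
  qed
qed

lemma enc_dl:
  assumes "u \<in> grid_vertices ns" "v \<in> grid_vertices ns" "u' \<in> grid_vertices ns" "v' \<in> grid_vertices ns"
    "int (enc ns u) - int (enc ns v) = int (enc ns u') - int (enc ns v')"
  shows "dl ns u v = dl ns u' v'"
  unfolding dl_def by (rule sum.cong) (use enc_diff[OF assms] in auto)



lemma a1: "((3::real) ^ k) ^ 5 = (3 ^ 5) ^ k"
  by (metis power_mult mult.commute)
lemma a2: "((2::real) ^ k) ^ 8 = (2 ^ 8) ^ k"
  by (metis power_mult mult.commute)
lemma a3: "((3::real) ^ 5) ^ k \<le> (2 ^ 8) ^ k"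
  by (rule power_mono) simp_all
lemma a4: "(((2::real) ^ k) powr (8/5)) ^ 5 = ((2::real) ^ k) ^ 8"
proof -
  have "(((2::real) ^ k) powr (8/5)) ^ 5 = ((2::real) ^ k) powr (real 5 * (8/5))"
    by (rule powr_power) simp
  also have "real 5 * (8/5) = (8::real)" by simp
  also have "((2::real) ^ k) powr 8 = ((2::real) ^ k) ^ 8" by (rule powr_numeral) simp
  finally show ?thesis .
qed
lemma three_pow_le: "real (3 ^ k) \<le> real (2 ^ k) powr (8/5)"
proof -
  have "((3::real) ^ k) ^ 5 \<le> (((2::real) ^ k) powr (8/5)) ^ 5"
    using a1 a2 a3 a4 by simp
  moreover have "0 \<le> ((2::real) ^ k) powr (8/5)" by simp
  ultimately have "(3::real) ^ k \<le> ((2::real) ^ k) powr (8/5)"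
    using power_mono_iff[of "(3::real) ^ k" "((2::real) ^ k) powr (8/5)" 5] by simp
  then show ?thesis by simp
qed

lemma prod_list_double: "prod_list (map (\<lambda>n. 2 * n) ns) = 2 ^ length ns * prod_list (ns :: nat list)"
  by (induction ns) auto

lemma prod_list_pos: "\<forall>i<length ns. ns ! i \<ge> 1 \<Longrightarrow> prod_list (ns :: nat list) \<ge> 1"
proof (induction ns)
  case Nil then show ?case by simp
next
  case (Cons n ns)
  have n: "n \<ge> 1" using Cons.prems(1)[rule_format, of 0] by simp
  have "\<forall>i<length ns. ns ! i \<ge> 1"
  proof (intro allI impI)
    fix i assume "i < length ns"
    then have "Suc i < length (n # ns)" by simp
    from Cons.prems(1)[rule_format, OF this] show "ns ! i \<ge> 1" by simp
  qed
  then have "prod_list ns \<ge> 1" by (rule Cons.IH)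
  then show ?case using n by simp
qed

lemma grid_prog:
  fixes f :: "nat \<Rightarrow> real" and ns :: "nat list"
  assumes pos: "\<forall>i<length ns. ns ! i \<ge> 1"
  shows "\<exists>P out. computes_matvec P out (grid_vertices ns)
                         (\<lambda>u v. f (graph_dist (grid_adj ns) u v))
                     \<and> real (length P) \<le> 2 ^ (length ns + 1) * real (card (grid_vertices ns))
                        + 5 * (2 ^ (length ns + 1) * real (card (grid_vertices ns))) powr (8/5)"
proof -
  define V where "V = grid_vertices ns"
  define L where "L = card V"
  define N0 where "N0 = prod_list (map (\<lambda>n. 2 * n) ns)"
  have L: "L = prod_list ns" "finite V" using card_grid[of ns] by (auto simp: L_def V_def)
  have N0L: "N0 = 2 ^ length ns * L" by (simp add: N0_def L prod_list_double)
  have L1: "L \<ge> 1" using prod_list_pos[OF pos] L by simp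
  define k where "k = (LEAST k. N0 \<le> 2 ^ k)"
  have ex: "N0 \<le> 2 ^ N0" by (metis less_exp less_imp_le)
  have kN: "N0 \<le> 2 ^ k" unfolding k_def by (rule LeastI[of _ N0]) (rule ex)
  have kup: "2 ^ k \<le> 2 * N0"
  proof (cases k)
    case 0 then show ?thesis using N0L L1 by simp
  next
    case (Suc j)
    have "\<not> N0 \<le> 2 ^ j" using Suc unfolding k_def by (metis Suc Suc_n_not_le_n k_def Least_le)
    then show ?thesis using Suc by simp
  qed
  define N where "N = (2::nat) ^ k"
  have encN: "\<And>u. u \<in> V \<Longrightarrow> enc ns u < N"
    using enc_bound kN unfolding V_def N_def N0_def by (meson order_less_le_trans)
  define Pr where "Pr p c \<longleftrightarrow> p \<in> V \<times> V \<and> int (enc ns (fst p)) - int (enc ns (snd p)) = c" for p c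
  define T where "T c = (if \<exists>p. Pr p c then f (dl ns (fst (SOME p. Pr p c)) (snd (SOME p. Pr p c))) else 0)" for c
  have Tuv: "T (int (enc ns u) - int (enc ns v)) = f (graph_dist (grid_adj ns) u v)" if uv: "u \<in> V" "v \<in> V" for u v
  proof -
    let ?c = "int (enc ns u) - int (enc ns v)"
    have e: "Pr (u, v) ?c" using uv by (simp add: Pr_def)
    then have s: "Pr (SOME p. Pr p ?c) ?c" by (rule someI)
    have "dl ns (fst (SOME p. Pr p ?c)) (snd (SOME p. Pr p ?c)) = dl ns u v"
      using s uv unfolding Pr_def V_def
      by (intro enc_dl) auto
    moreover have "\<exists>p. Pr p ?c" using e by blast
    ultimately show ?thesis using uv by (simp add: T_def dist_dl V_def)
  qed
  define I :: "nat list instr list" where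
    "I = map (\<lambda>b. if b \<in> enc ns ` V then Input (inv_into V (enc ns) b) else Const 0) [0..<N]"
  define Q :: "nat list instr list" where "Q = genP k T [0..<N] N"
  define P where "P = I @ Q"
  define out where "out u = glen k + enc ns u" for u
  have lI: "length I = N" by (simp add: I_def)
  have lP: "length P = N + glen k" by (simp add: P_def lI Q_def)
  have wf: "wf_prog P"
  proof -
    have "frag_ok 0 I" unfolding I_def by (rule frag_ok_block) auto
    moreover have "frag_ok N Q" unfolding Q_def by (rule genP_ok) (auto simp: N_def)
    ultimately show ?thesis by (simp add: wf_frag P_def frag_ok_append lI)
  qed
  have outs: "\<forall>u\<in>V. out u < length P" using encN by (simp add: out_def lP)
  have val: "run_prog P x ! out u = (\<Sum>v\<in>V. f (graph_dist (grid_adj ns) u v) * x v)"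
    if u: "u \<in> V" for x u
  proof -
    define X where "X b = (if b \<in> enc ns ` V then x (inv_into V (enc ns) b) else 0)" for b
    define r0 where "r0 = exec x I []"
    have lr0: "length r0 = N" by (simp add: r0_def lI)
    have r0v: "r0 ! b = X b" if "b < N" for b
    proof -
      have "exec x I [] ! (length ([]::real list) + b) =
         eval_instr x [] (if b \<in> enc ns ` V then Input (inv_into V (enc ns) b) else Const 0)"
        unfolding I_def by (rule exec_block) (use that in auto)
      then show ?thesis by (simp add: r0_def X_def)
    qed
    have "run_prog P x = exec x Q r0" by (simp add: run_exec P_def exec_append r0_def)
    then have "run_prog P x ! out u = exec x (genP k T [0..<N] (length r0)) r0 ! (length r0 + glen k - 2 ^ k + enc ns u)"
      by (simp add: Q_def lr0 out_def N_def)
    also have "\<dots> = (\<Sum>j<2^k. T (int (enc ns u) - int j) * r0 ! ([0..<N] ! j))"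
      by (rule genP_val) (use encN u lr0 in \<open>auto simp: N_def\<close>)
    also have "\<dots> = (\<Sum>j<N. T (int (enc ns u) - int j) * X j)"
      by (rule sum.cong) (auto simp: N_def r0v)
    also have "\<dots> = (\<Sum>j\<in>enc ns ` V. T (int (enc ns u) - int j) * X j)"
      by (rule sum.mono_neutral_right) (use encN in \<open>auto simp: X_def\<close>)
    also have "\<dots> = (\<Sum>v\<in>V. T (int (enc ns u) - int (enc ns v)) * X (enc ns v))"
      by (rule sum.reindex[unfolded comp_def]) (simp add: enc_inj V_def)
    also have "\<dots> = (\<Sum>v\<in>V. f (graph_dist (grid_adj ns) u v) * x v)"
      by (rule sum.cong) (use u enc_inj in \<open>auto simp: Tuv X_def V_def inv_into_f_f\<close>)
    finally show ?thesis .
  qed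
  have "computes_matvec P out V (\<lambda>u v. f (graph_dist (grid_adj ns) u v))"
    unfolding computes_matvec_def using wf outs val by blast
  moreover have "real (length P) \<le> 2 ^ (length ns + 1) * real L + 5 * (2 ^ (length ns + 1) * real L) powr (8/5)"
  proof -
    have "2 ^ k \<le> 2 * (2 ^ length ns * L)" using kup N0L by simp
    then have "real (2 ^ k) \<le> real (2 * (2 ^ length ns * L))" by (simp only: of_nat_le_iff)
    then have NL: "real N \<le> 2 ^ (length ns + 1) * real L" by (simp add: N_def)
    have "real (glen k) \<le> real (5 * 3 ^ k)" by (simp only: of_nat_le_iff glen_bound)
    also have "\<dots> = 5 * real (3 ^ k)" by simp
    also have "\<dots> \<le> 5 * real N powr (8/5)" using three_pow_le[of k] by (simp add: N_def)
    also have "\<dots> \<le> 5 * (2 ^ (length ns + 1) * real L) powr (8/5)"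
      using NL by (simp add: powr_mono2)
    finally have G: "real (glen k) \<le> 5 * (2 ^ (length ns + 1) * real L) powr (8/5)" .
    have "real (length P) = real N + real (glen k)" using lP by simp
    then show ?thesis using NL G by linarith
  qed
  ultimately have "\<exists>P out. computes_matvec P out V (\<lambda>u v. f (graph_dist (grid_adj ns) u v)) \<and>
     real (length P) \<le> 2 ^ (length ns + 1) * real L + 5 * (2 ^ (length ns + 1) * real L) powr (8/5)"
    by blast
  then show ?thesis by (simp only: V_def L_def)
qed

lemma g_small: "(c::real) > 0 \<Longrightarrow> (\<lambda>L::nat. c * real L + 5 * (c * real L) powr (8/5)) \<in> o(\<lambda>L. real L ^ 2)"
  by real_asymp

theorem corollary3p4:
  fixes d :: nat and f :: "nat \<Rightarrow> real"
  assumes "d \<ge> 1"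
  shows "\<exists>g :: nat \<Rightarrow> real. g \<in> o(\<lambda>L. real L ^ 2) \<and>
           (\<forall>ns. length ns = d \<longrightarrow> (\<forall>i<d. ns ! i \<ge> 1) \<longrightarrow>
              (\<exists>P out. computes_matvec P out (grid_vertices ns)
                         (\<lambda>u v. f (graph_dist (grid_adj ns) u v))
                     \<and> real (length P) \<le> g (card (grid_vertices ns))))"
proof (rule exI[of _ "\<lambda>L::nat. 2 ^ (d + 1) * real L + 5 * (2 ^ (d + 1) * real L) powr (8/5)"], intro conjI allI impI)
  show "(\<lambda>L::nat. 2 ^ (d + 1) * real L + 5 * (2 ^ (d + 1) * real L) powr (8/5)) \<in> o(\<lambda>L. real L ^ 2)"
    by (rule g_small) simp
next
  fix ns :: "nat list" assume l: "length ns = d" and p: "\<forall>i<d. ns ! i \<ge> 1"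
  have p': "\<forall>i<length ns. ns ! i \<ge> 1" using l p by simp
  show "\<exists>P out. computes_matvec P out (grid_vertices ns)
                         (\<lambda>u v. f (graph_dist (grid_adj ns) u v))
                     \<and> real (length P) \<le> 2 ^ (d + 1) * real (card (grid_vertices ns))
                        + 5 * (2 ^ (d + 1) * real (card (grid_vertices ns))) powr (8/5)"
    using grid_prog[OF p', of f] unfolding l .
qed


end
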